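(* Consider the network and loss $\mathcal{L}$ from the context. If $\mathbf{P}\in\mathbb{R}^D$ is such that there exist $i\in I$ and $k\in K$ with $\rho(\mathbf{w}_i\cdot\mathbf{x}_k)\ne0$, then $\mathbf{P}$ is not a local maximum of $\mathcal{L}$.
   Context: Fix an integer $d>1$, finite index sets $I$ (hidden neurons), $J$ (output neurons), $K$ (samples), reals $\alpha^+\neq\alpha^-$, and $\rho(z)=\alpha^+z$ for $z\ge0$, $\rho(z)=\alpha^-z$ for $z<0$ (componentwise). Parameters $\mathbf{P}=(W,H)\in\mathbb{R}^D$, $D=|J||I|+|I|d$, with $W\in\mathbb{R}^{|I|\times d}$ having rows $\mathbf{w}_i$ and $H=(h_{ji})\in\mathbb{R}^{|J|\times|I|}$; output $\hat{\mathbf{y}}(\mathbf{P};\mathbf{x})=H\rho(W\mathbf{x})$; training data $\mathbf{x}_k\in\mathbb{R}^d$, $\mathbf{y}_k\in\mathbb{R}^{|J|}$; loss $\mathcal{L}(\mathbf{P})=\frac12\sum_{k\in K}\|\hat{\mathbf{y}}(\mathbf{P};\mathbf{x}_k)-\mathbf{y}_k\|^2$. *)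

theory Defs
  imports "HOL-Analysis.Analysis"
begin

definition act :: "real \<Rightarrow> real \<Rightarrow> real \<Rightarrow> real" where
  "act ap am z = (if z \<ge> 0 then ap * z else am * z)"

text \<open>Network output: yhat(P; x) = H rho(W x), with W rows w_i and H = (h_ji).
  Parameters P = (W, H) \<in> (real^'d^'i) \<times> (real^'i^'j), which is R^D with its Euclidean topology.\<close>
definition net_out ::
  "real \<Rightarrow> real \<Rightarrow> (real^'d^'i) \<times> (real^'i^'j) \<Rightarrow> real^'d \<Rightarrow> real^'j" where
  "net_out ap am P x = (\<chi> j. \<Sum>i\<in>UNIV. (snd P $ j $ i) * act ap am ((fst P $ i) \<bullet> x))"

definition loss ::
  "real \<Rightarrow> real \<Rightarrow> ('k \<Rightarrow> real^'d) \<Rightarrow> ('k \<Rightarrow> real^'j)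
     \<Rightarrow> (real^'d^'i) \<times> (real^'i^'j) \<Rightarrow> real" where
  "loss ap am X Y P = (1/2) * (\<Sum>k\<in>UNIV. (norm (net_out ap am P (X k) - Y k))^2)"

definition local_max :: "('a::metric_space \<Rightarrow> real) \<Rightarrow> 'a \<Rightarrow> bool" where
  "local_max f p \<longleftrightarrow> (\<exists>e>0. \<forall>q. dist q p < e \<longrightarrow> f q \<le> f p)"

end

theory Submission
  imports Defs
begin

theorem theorem2:
  fixes ap am :: real
    and X :: "'k::finite \<Rightarrow> real^'d::finite"
    and Y :: "'k \<Rightarrow> real^'j::finite"
    and P :: "(real^'d^'i::finite) \<times> (real^'i^'j)"
  assumes "CARD('d) > 1"
    and "ap \<noteq> am"
    and "\<exists>i k. act ap am ((fst P $ i) \<bullet> X k) \<noteq> 0"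
  shows "\<not> local_max (loss ap am X Y) P"
proof
  assume lm: "local_max (loss ap am X Y) P"
  obtain i0 k0 where ik: "act ap am ((fst P $ i0) \<bullet> X k0) \<noteq> 0" using assms(3) by blast
  obtain j0 :: 'j where True by blast
  define V :: "real^'i^'j" where "V = (\<chi> j i. if j = j0 \<and> i = i0 then 1 else 0)"
  define Q where "Q t = (fst P, snd P + t *\<^sub>R V)" for t :: real
  define a where "a k = net_out ap am P (X k) - Y k" for k
  define b where "b k = (\<chi> j. \<Sum>i\<in>UNIV. V $ j $ i * act ap am ((fst P $ i) \<bullet> X k))" for k
  define B where "B = (\<Sum>k\<in>UNIV. (norm (b k))^2)"
  have out: "net_out ap am (Q t) (X k) - Y k = a k + t *\<^sub>R b k" for t k
    unfolding Q_def a_def b_def net_out_def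
    by (simp add: vec_eq_iff sum.distrib distrib_right sum_distrib_left algebra_simps)
  have nrm: "(norm (u + t *\<^sub>R v))^2 = (norm u)^2 + 2*t*(u \<bullet> v) + t^2 * (norm v)^2"
    for u v :: "real^'j" and t :: real
    unfolding power2_norm_eq_inner by (simp add: inner_add_left inner_add_right inner_commute power2_eq_square algebra_simps)
  have lossQ: "loss ap am X Y (Q t) = loss ap am X Y P + t * (\<Sum>k\<in>UNIV. a k \<bullet> b k) + t^2/2 * B" for t
  proof -
    have "loss ap am X Y (Q t) = (1/2) * (\<Sum>k\<in>UNIV. (norm (a k))^2 + 2*t*(a k \<bullet> b k) + t^2 * (norm (b k))^2)"
      unfolding loss_def out nrm by simp
    also have "\<dots> = (1/2) * (\<Sum>k\<in>UNIV. (norm (a k))^2) + t * (\<Sum>k\<in>UNIV. a k \<bullet> b k) + t^2/2 * B"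
      unfolding B_def by (simp add: sum.distrib sum_distrib_left algebra_simps)
    also have "(1/2) * (\<Sum>k\<in>UNIV. (norm (a k))^2) = loss ap am X Y P"
      unfolding loss_def a_def by simp
    finally show ?thesis .
  qed
  have "b k0 $ j0 = act ap am ((fst P $ i0) \<bullet> X k0)"
    proof -
    have fe: "(\<lambda>i. V $ j0 $ i * act ap am ((fst P $ i) \<bullet> X k0)) = (\<lambda>i. if i = i0 then act ap am ((fst P $ i) \<bullet> X k0) else 0)"
      unfolding V_def by auto
    hence "b k0 $ j0 = (\<Sum>i\<in>UNIV. if i = i0 then act ap am ((fst P $ i) \<bullet> X k0) else 0)"
      unfolding b_def vec_lambda_beta by (simp only: fe)
    also have "\<dots> = act ap am ((fst P $ i0) \<bullet> X k0)" by (subst sum.delta) simp_all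
    finally show ?thesis .
  qed
  hence "b k0 \<noteq> 0" using ik by auto
  hence "(norm (b k0))^2 > 0" by simp
  moreover have "(norm (b k0))^2 \<le> B" unfolding B_def
    by (rule member_le_sum) auto
  ultimately have Bpos: "B > 0" by linarith
  obtain e where e: "e > 0" "\<forall>q. dist q P < e \<longrightarrow> loss ap am X Y q \<le> loss ap am X Y P"
    using lm unfolding local_max_def by blast
  define n where "n = norm ((0::real^'d^'i), V)"
  define t where "t = e / (2 * (n + 1))"
  have n0: "n \<ge> 0" unfolding n_def by simp
  have tpos: "t > 0" unfolding t_def using e n0 by simp
  have dQ: "dist (Q s) P = \<bar>s\<bar> * n" for s
  proof -
    have "Q s - P = s *\<^sub>R ((0::real^'d^'i), V)" unfolding Q_def by (cases P) simp
    thus ?thesis unfolding n_def dist_norm by simp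
  qed
  have en: "e * n \<ge> 0" using e(1) n0 by simp
  have "\<bar>t\<bar> * n < e" unfolding t_def using e(1) n0
    apply (simp add: field_simps) using en by linarith
  hence "dist (Q t) P < e" "dist (Q (-t)) P < e" using dQ by auto
  hence "loss ap am X Y (Q t) \<le> loss ap am X Y P" "loss ap am X Y (Q (-t)) \<le> loss ap am X Y P"
    using e(2) by blast+
  hence "t^2 * B \<le> 0" unfolding lossQ by (simp add: algebra_simps)
  moreover have "t^2 * B > 0" using tpos Bpos by simp
  ultimately show False by linarith
qed

end
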